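(* For every positive integer $k$, $f(k)\geq \frac{k(k-2)}{3}$.
   Context: A $k$-colouring of the edges of the complete graph $K_n$ (colours from $[k]=\{1,\dots,k\}$) is called connected if for each colour $i\in[k]$ the edges of colour $i$ form a connected spanning subgraph of $K_n$ (i.e. a connected graph on all $n$ vertices). A triangle is multicoloured if its three edges have three distinct colours; its colour set is the set of these three colours. $f(k)$ denotes the minimum, over all $n$ and all connected $k$-colourings of $K_n$, of the number of distinct $3$-sets of colours that occur as colour sets of multicoloured triangles. *)

theory Defs
  imports Complex_Main
begin

definition colouring :: "nat \<Rightarrow> nat \<Rightarrow> (nat \<Rightarrow> nat \<Rightarrow> nat) \<Rightarrow> bool" where
  "colouring k n c \<longleftrightarrow>
     (\<forall>x<n. \<forall>y<n. x \<noteq> y \<longrightarrow> c x y = c y x \<and> c x y \<in> {1..k})"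

definition colour_edges :: "nat \<Rightarrow> (nat \<Rightarrow> nat \<Rightarrow> nat) \<Rightarrow> nat \<Rightarrow> (nat \<times> nat) set" where
  "colour_edges n c i = {(x, y). x < n \<and> y < n \<and> x \<noteq> y \<and> c x y = i}"

definition colour_connected :: "nat \<Rightarrow> (nat \<Rightarrow> nat \<Rightarrow> nat) \<Rightarrow> nat \<Rightarrow> bool" where
  "colour_connected n c i \<longleftrightarrow> (\<forall>u<n. \<forall>v<n. (u, v) \<in> (colour_edges n c i)\<^sup>*)"

definition connected_colouring :: "nat \<Rightarrow> nat \<Rightarrow> (nat \<Rightarrow> nat \<Rightarrow> nat) \<Rightarrow> bool" where
  "connected_colouring k n c \<longleftrightarrow> colouring k n c \<and> (\<forall>i\<in>{1..k}. colour_connected n c i)"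

definition multicoloured_sets :: "nat \<Rightarrow> (nat \<Rightarrow> nat \<Rightarrow> nat) \<Rightarrow> nat set set" where
  "multicoloured_sets n c =
     {{c x y, c y z, c x z} | x y z. x < n \<and> y < n \<and> z < n \<and>
        x \<noteq> y \<and> y \<noteq> z \<and> x \<noteq> z \<and> card {c x y, c y z, c x z} = 3}"

definition f :: "nat \<Rightarrow> nat" where
  "f k = Inf {card (multicoloured_sets n c) | n c. 2 \<le> n \<and> connected_colouring k n c}"

end

theory Submission
  imports Defs
begin


definition norainbow :: "nat \<Rightarrow> (nat \<Rightarrow> nat \<Rightarrow> nat) \<Rightarrow> bool" where
  "norainbow n L \<longleftrightarrow> (\<forall>x<n. \<forall>y<n. \<forall>z<n. x\<noteq>y \<longrightarrow> y\<noteq>z \<longrightarrow> x\<noteq>z \<longrightarrow>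
      L x y = L y z \<or> L y z = L x z \<or> L x y = L x z)"

definition labelling :: "nat \<Rightarrow> (nat \<Rightarrow> nat \<Rightarrow> nat) \<Rightarrow> bool" where
  "labelling n L \<longleftrightarrow> (\<forall>x<n. \<forall>y<n. x\<noteq>y \<longrightarrow> L x y = L y x \<and> L x y < 3)"

lemma gallai_step:
  assumes lab: "labelling (Suc n) L" and nr: "norainbow (Suc n) L"
    and r: "r < 3" "\<not> colour_connected n L r"
    and all: "\<forall>l<3. colour_connected (Suc n) L l"
  shows False
proof -
  define E where "E = colour_edges n L r"
  define R where "R = E\<^sup>*"
  have Esym: "sym E" unfolding E_def colour_edges_def sym_def using lab
    by (auto simp: labelling_def)
  have Rsym: "(y,x) \<in> R" if "(x,y) \<in> R" for x y
    using that sym_rtrancl[OF Esym] unfolding R_def by (meson symD)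
  have Rtr: "(x,z) \<in> R" if "(x,y) \<in> R" "(y,z) \<in> R" for x y z
    using that unfolding R_def by simp
  have Rrefl: "(x,x) \<in> R" for x unfolding R_def by simp
  have Ein: "(x,y) \<in> R" if "x<n" "y<n" "x\<noteq>y" "L x y = r" for x y
    using that unfolding R_def E_def colour_edges_def by auto
  have Rbd: "x = y \<or> (x<n \<and> y<n)" if "(x,y) \<in> R" for x y
    using that unfolding R_def
    by (induction rule: rtrancl_induct) (auto simp: E_def colour_edges_def)
  have A: "L y x = L y x'" if "(x,x') \<in> R" "(y,x) \<notin> R" "y < n" for x x' y
    using that(1)[unfolded R_def]
  proof (induction rule: rtrancl_induct)
    case base then show ?case by simp
  next
    case (step x1 x2)
    have x12: "x1 < n" "x2 < n" "x1 \<noteq> x2" "L x1 x2 = r"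
      using step(2) by (auto simp: E_def colour_edges_def)
    have n1: "(y,x1) \<notin> R" using that(2) step(1) Rsym Rtr R_def by blast
    have n2: "(y,x2) \<notin> R" using n1 step(2) Rtr Rsym R_def by blast
    have "y \<noteq> x1" "y \<noteq> x2" using n1 n2 Rrefl by auto
    moreover have "L y x1 \<noteq> r" "L y x2 \<noteq> r" using n1 n2 Ein that(3) x12 calculation by auto
    ultimately have "L y x1 = L y x2"
      using nr[unfolded norainbow_def, rule_format, of y x1 x2] x12 that(3) \<open>y \<noteq> x1\<close> \<open>y \<noteq> x2\<close>
        \<open>L y x1 \<noteq> r\<close> \<open>L y x2 \<noteq> r\<close> by auto
    then show ?case using step by simp
  qed
  have B: "\<exists>x'. (x,x') \<in> R \<and> L x' n = r" if xlt: "x < n" for x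
  proof -
    have xn: "(x, n) \<in> (colour_edges (Suc n) L r)\<^sup>*"
      using all r(1) that unfolding colour_connected_def by auto
    have "(z0 < n \<and> (x,z0) \<in> R) \<or> (\<exists>x'. (x,x') \<in> R \<and> L x' n = r)"
      if "(x, z0) \<in> (colour_edges (Suc n) L r)\<^sup>*" for z0
      using that
    proof (induction rule: rtrancl_induct)
      case base then show ?case using xlt Rrefl by auto
    next
      case (step z w)
      have zw: "z < Suc n" "w < Suc n" "z \<noteq> w" "L z w = r"
        using step(2) by (auto simp: colour_edges_def)
      from step(3) show ?case
      proof
        assume h: "z < n \<and> (x, z) \<in> R"
        show ?case
        proof (cases "w < n")
          case True
          then have "(z,w) \<in> R" using Ein h zw by auto
          then show ?thesis using h Rtr True by blast
        next
          case False
          then have "w = n" using zw by auto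
          then show ?thesis using h zw by auto
        qed
      qed simp
    qed
    from this[OF xn] show ?thesis by auto
  qed
  have C: "L n y = r \<or> L n y = L y y'" if hy: "y<n" "y'<n" "(y,y') \<notin> R" for y y'
  proof -
    obtain x' where x': "(y',x') \<in> R" "L x' n = r" using B hy(2) by blast
    have x'n: "x' < n" using Rbd[OF x'(1)] hy by auto
    have nyx: "(y,x') \<notin> R" using hy(3) x'(1) Rtr Rsym by blast
    have eq: "L y y' = L y x'" using A[OF x'(1) hy(3) hy(1)] .
    have "y \<noteq> x'" using nyx Rrefl by auto
    have "y \<noteq> y'" using hy(3) Rrefl by auto
    have "L y y' \<noteq> r" using Ein hy \<open>y \<noteq> y'\<close> by auto
    have s1: "L n x' = r" using x' lab x'n unfolding labelling_def by (metis lessI less_SucI less_irrefl)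
    have s2: "L x' y = L y x'" using lab x'n hy(1) \<open>y \<noteq> x'\<close> unfolding labelling_def by (metis less_SucI)
    have "L n x' = L x' y \<or> L x' y = L n y \<or> L n x' = L n y"
      apply (rule nr[unfolded norainbow_def, rule_format])
      using x'n hy(1) \<open>y \<noteq> x'\<close> by auto
    then show ?thesis using s1 s2 eq \<open>L y y' \<noteq> r\<close> by auto
  qed
  obtain p q where pq: "p < n" "q < n" "(p,q) \<notin> R"
    using r(2) unfolding colour_connected_def R_def E_def by auto
  have pqne: "p \<noteq> q" using pq Rrefl by auto
  have Lpq: "L p q \<noteq> r" "L p q < 3" using Ein pq pqne lab unfolding labelling_def
    by (auto simp: less_SucI)
  have "\<exists>c. c \<noteq> r \<and> c < 3 \<and> (\<forall>y<n. \<exists>y'<n. (y,y') \<notin> R \<and> L y y' = c)"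
  proof (cases "\<forall>y<n. \<exists>y'<n. (y,y') \<notin> R \<and> L y y' = L p q")
    case True then show ?thesis using Lpq by blast
  next
    case False
    then obtain y0 where y0: "y0 < n" "\<forall>y'<n. (y0,y') \<notin> R \<longrightarrow> L y0 y' \<noteq> L p q" by blast
    obtain c1 where c1: "c1 < 3" "c1 \<noteq> r" "c1 \<noteq> L p q"
    proof -
      have "\<exists>c1::nat. c1 < 3 \<and> c1 \<noteq> r \<and> c1 \<noteq> L p q" 
        by (metis less_numeral_extra(1) nat_neq_iff not_less_eq numeral_2_eq_2 numeral_3_eq_3 zero_less_Suc)
      then show ?thesis using that by blast
    qed
    have y0c: "L y0 y' = c1" if "y' < n" "(y0,y') \<notin> R" for y'
    proof -
      have "y0 \<noteq> y'" using that Rrefl by auto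
      then have "L y0 y' < 3" "L y0 y' \<noteq> r" using lab y0 that Ein unfolding labelling_def by (auto simp: less_SucI)
      moreover have "L y0 y' \<noteq> L p q" using y0(2) that by blast
      ultimately show ?thesis using c1 Lpq r(1) by presburger
    qed
    obtain z where z: "z < n" "(y0,z) \<notin> R"
    proof (cases "(y0,p) \<in> R")
      case True
      then have "(p,y0) \<in> R" by (rule Rsym)
      then have "(y0,q) \<notin> R" using pq(3) Rtr by blast
      then show ?thesis using that pq(2) by blast
    next
      case False then show ?thesis using that pq(1) by blast
    qed
    have "\<forall>y<n. \<exists>y'<n. (y,y') \<notin> R \<and> L y y' = c1"
    proof (intro allI impI)
      fix y assume y: "y < n"
      show "\<exists>y'<n. (y,y') \<notin> R \<and> L y y' = c1"
      proof (cases "(y,y0) \<in> R")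
        case False
        then have "(y0,y) \<notin> R" using Rsym by blast
        then have "L y0 y = c1" using y0c y by auto
        moreover have "y \<noteq> y0" using False Rrefl by auto
        ultimately have "L y y0 = c1" using lab y y0(1) unfolding labelling_def by (metis less_SucI)
        then show ?thesis using False y0(1) by blast
      next
        case True
        have nyz: "(y,z) \<notin> R" using Rtr[OF Rsym[OF True]] z by blast
        have "(z,y0) \<notin> R" using z Rsym by blast
        then have "L z y0 = L z y" using A[OF Rsym[OF True]] z(1) by blast
        moreover have "y0 \<noteq> z" "y \<noteq> z" using z nyz Rrefl by auto
        ultimately have "L y z = c1" using y0c[OF z] lab y y0(1) z(1) unfolding labelling_def
          by (metis less_SucI)
        then show ?thesis using nyz z(1) by blast
      qed
    qed
    then show ?thesis using c1 by blast
  qed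
  then obtain c where c: "c \<noteq> r" "c < 3" "\<forall>y<n. \<exists>y'<n. (y,y') \<notin> R \<and> L y y' = c" by blast
  obtain d where d: "d < 3" "d \<noteq> r" "d \<noteq> c"
  proof -
    have "\<exists>d::nat. d < 3 \<and> d \<noteq> r \<and> d \<noteq> c"
      by (metis less_numeral_extra(1) nat_neq_iff not_less_eq numeral_2_eq_2 numeral_3_eq_3 zero_less_Suc)
    then show ?thesis using that by blast
  qed
  have nod: "L n y \<noteq> d" if "y < n" for y using C c(3) that d by metis
  have "(n, 0) \<in> (colour_edges (Suc n) L d)\<^sup>*"
    using all d(1) unfolding colour_connected_def by auto
  moreover have "n \<noteq> 0" using pq by auto
  ultimately obtain w where w: "(n,w) \<in> colour_edges (Suc n) L d"
    by (metis converse_rtranclE)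
  then have "w < n" "L n w = d" using w by (auto simp: colour_edges_def)
  then show False using nod by blast
qed



lemma gallai:
  assumes "2 \<le> n" "labelling n L" "norainbow n L"
  shows "\<exists>l<3. \<not> colour_connected n L l"
  using assms
proof (induction n rule: nat_induct_at_least)
  case base
  define l0 where "l0 = L 0 1"
  define l where "l = (if l0 = 0 then 1 else (0::nat))"
  have l: "l < 3" "l \<noteq> l0" unfolding l_def by auto
  have L10: "L 1 0 = l0" using base(1) unfolding labelling_def l0_def
    by (metis one_less_numeral_iff pos2 semiring_norm(76) zero_neq_one)
  have all2: "L a b = l0" if "a < 2" "b < 2" "a \<noteq> b" for a b
  proof -
    have "(a = 0 \<and> b = 1) \<or> (a = 1 \<and> b = 0)" using that by linarith
    then show ?thesis using L10 l0_def by auto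
  qed
  have e: "colour_edges 2 L l = {}"
  proof (rule equals0I)
    fix p assume "p \<in> colour_edges 2 L l"
    then obtain a b where "p = (a,b)" "a < 2" "b < 2" "a \<noteq> b" "L a b = l"
      unfolding colour_edges_def by blast
    then show False using all2 l(2) by metis
  qed
  have "\<not> colour_connected 2 L l"
  proof
    assume h: "colour_connected 2 L l"
    have "(0::nat,1) \<in> (colour_edges 2 L l)\<^sup>*" using h unfolding colour_connected_def by simp
    then show False using e by simp
  qed
  then show ?case using l by blast
next
  case (Suc n)
  have "labelling n L" using Suc.prems(1) unfolding labelling_def
    by (meson less_SucI)
  moreover have "norainbow n L" using Suc.prems(2) unfolding norainbow_def
    by (meson less_SucI)
  ultimately obtain r where r: "r < 3" "\<not> colour_connected n L r" using Suc.IH by blast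
  show ?case
  proof (rule ccontr)
    assume "\<not> (\<exists>l<3. \<not> colour_connected (Suc n) L l)"
    then have "\<forall>l<3. colour_connected (Suc n) L l" by blast
    then show False using gallai_step[OF Suc.prems r] by blast
  qed
qed


lemma mono_conn:
  assumes "colour_connected n c i" "\<And>x y. x < n \<Longrightarrow> y < n \<Longrightarrow> x \<noteq> y \<Longrightarrow> c x y = i \<Longrightarrow> L x y = l"
  shows "colour_connected n L l"
proof -
  have "colour_edges n c i \<subseteq> colour_edges n L l"
    using assms(2) unfolding colour_edges_def by auto
  then show ?thesis using assms(1) rtrancl_mono unfolding colour_connected_def by blast
qed

lemma cut:
  assumes cc: "connected_colouring k n c" and n2: "2 \<le> n" and i: "i \<in> {1..k}"
    and a: "a \<in> S" and S: "S \<subseteq> {1..k}" "i \<notin> S"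
    and b: "b \<in> {1..k}" "b \<noteq> i" "b \<notin> S"
  shows "\<exists>T\<in>multicoloured_sets n c. \<exists>b'. i \<in> T \<and> b' \<in> T \<and> b' \<in> {1..k} \<and> b' \<noteq> i \<and> b' \<notin> S
           \<and> T \<subseteq> insert b' (insert i S)"
proof -
  define L where "L = (\<lambda>x y. if c x y = i then 0 else if c x y \<in> S then 1 else (2::nat))"
  have col: "colouring k n c" and con: "\<forall>j\<in>{1..k}. colour_connected n c j"
    using cc unfolding connected_colouring_def by auto
  have lab: "labelling n L" using col unfolding labelling_def colouring_def L_def by auto
  have c0: "colour_connected n L 0"
    by (rule mono_conn[OF con[rule_format, OF i]]) (auto simp: L_def)
  have c1: "colour_connected n L 1"
    by (rule mono_conn[OF con[rule_format, of a]]) (use a S in \<open>auto simp: L_def\<close>)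
  have c2: "colour_connected n L 2"
    by (rule mono_conn[OF con[rule_format, of b]]) (use b in \<open>auto simp: L_def\<close>)
  have "\<not> norainbow n L"
  proof
    assume "norainbow n L"
    then obtain l where "l < 3" "\<not> colour_connected n L l" using gallai[OF n2 lab] by blast
    then show False using c0 c1 c2 by (metis less_Suc_eq numeral_3_eq_3 numeral_2_eq_2 One_nat_def less_one)
  qed
  then obtain x y z where xyz: "x<n" "y<n" "z<n" "x\<noteq>y" "y\<noteq>z" "x\<noteq>z"
    "L x y \<noteq> L y z" "L y z \<noteq> L x z" "L x y \<noteq> L x z"
    unfolding norainbow_def by blast
  define T where "T = {c x y, c y z, c x z}"
  have Tk: "T \<subseteq> {1..k}" using col xyz unfolding colouring_def T_def by auto
  have dist: "c x y \<noteq> c y z" "c y z \<noteq> c x z" "c x y \<noteq> c x z"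
    using xyz(7) apply (metis L_def) using xyz(8) apply (metis L_def) using xyz(9) by (metis L_def)
  then have "card T = 3" unfolding T_def by auto
  then have TF: "T \<in> multicoloured_sets n c" unfolding multicoloured_sets_def T_def using xyz by blast
  have iT: "i \<in> T" using xyz unfolding T_def L_def by (auto split: if_splits)
  obtain b' where b': "b' \<in> T" "b' \<noteq> i" "b' \<notin> S" 
    using xyz unfolding T_def L_def by (auto split: if_splits)
  have sub: "T \<subseteq> insert b' (insert i S)"
    using xyz b' unfolding T_def L_def by (auto split: if_splits)
  show ?thesis using TF iT b' sub Tk by blast
qed



lemma F_props:
  assumes "colouring k n c" "T \<in> multicoloured_sets n c"
  shows "T \<subseteq> {1..k}" "card T = 3"
proof -
  obtain x y z where T: "T = {c x y, c y z, c x z}" "x < n" "y < n" "z < n" "x \<noteq> y" "y \<noteq> z" "x \<noteq> z"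
    "card {c x y, c y z, c x z} = 3"
    using assms(2) unfolding multicoloured_sets_def by blast
  have "c x y \<in> {1..k}" "c y z \<in> {1..k}" "c x z \<in> {1..k}"
    using assms(1) T(2-7) unfolding colouring_def by blast+
  then show "T \<subseteq> {1..k}" using T(1) by blast
  show "card T = 3" using T by simp
qed

lemma F_finite:
  assumes "colouring k n c"
  shows "finite (multicoloured_sets n c)"
proof -
  have "multicoloured_sets n c \<subseteq> Pow {1..k}" using F_props[OF assms] by blast
  then show ?thesis by (rule finite_subset) simp
qed

lemma link:
  assumes cc: "connected_colouring k n c" and n2: "2 \<le> n" and i: "i \<in> {1..k}" and k2: "2 \<le> k"
  shows "k - 2 \<le> card {T \<in> multicoloured_sets n c. i \<in> T}"
proof -
  define F where "F = multicoloured_sets n c"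
  have col: "colouring k n c" using cc unfolding connected_colouring_def by auto
  have finF: "finite F" unfolding F_def by (rule F_finite[OF col])
  have claim: "\<exists>S. S \<subseteq> {1..k} - {i} \<and> card S = m+1 \<and> m \<le> card {T\<in>F. i \<in> T \<and> T \<subseteq> insert i S}"
    if "m \<le> k - 2" for m
    using that
  proof (induction m)
    case 0
    define j where "j = (if i = 1 then 2 else (1::nat))"
    have "j \<in> {1..k} - {i}" using k2 unfolding j_def by auto
    then show ?case by (intro exI[of _ "{j}"]) auto
  next
    case (Suc m)
    then obtain S where S: "S \<subseteq> {1..k} - {i}" "card S = m+1"
      "m \<le> card {T\<in>F. i \<in> T \<and> T \<subseteq> insert i S}" by auto
    have finS: "finite S" using S(1) finite_subset by blast
    have ck: "card ({1..k} - {i}) = k - 1" using i by auto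
    have "S \<noteq> {1..k} - {i}" using S(2) ck Suc.prems by (intro notI) simp
    then obtain b where b: "b \<in> {1..k}" "b \<noteq> i" "b \<notin> S" using S(1) by blast
    have "S \<noteq> {}" using S(2) by (intro notI) simp
    then obtain a where a: "a \<in> S" by blast
    obtain T b' where T: "T \<in> F" "i \<in> T" "b' \<in> T" "b' \<in> {1..k}" "b' \<noteq> i" "b' \<notin> S"
      "T \<subseteq> insert b' (insert i S)"
      using cut[OF cc n2 i a _ _ b] S(1) unfolding F_def by blast
    define S' where "S' = insert b' S"
    have S'1: "S' \<subseteq> {1..k} - {i}" using S(1) T unfolding S'_def by auto
    have S'2: "card S' = Suc m + 1" using S(2) T(6) finS unfolding S'_def by simp
    let ?G = "{T\<in>F. i \<in> T \<and> T \<subseteq> insert i S}"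
    let ?G' = "{T\<in>F. i \<in> T \<and> T \<subseteq> insert i S'}"
    have "insert T ?G \<subseteq> ?G'" using T(1,2,7) unfolding S'_def by blast
    moreover have "T \<notin> ?G" using T(3,5,6) by blast
    moreover have "finite ?G'" using finF by simp
    moreover have "finite ?G" using finF by simp
    ultimately have "Suc (card ?G) \<le> card ?G'"
      using card_insert_disjoint[of ?G T] card_mono[of ?G' "insert T ?G"] by simp
    then have "Suc m \<le> card ?G'" using S(3) by simp
    then show ?case using S'1 S'2 by blast
  qed
  obtain S where S: "k - 2 \<le> card {T\<in>F. i \<in> T \<and> T \<subseteq> insert i S}" using claim[of "k-2"] by blast
  have "{T\<in>F. i \<in> T \<and> T \<subseteq> insert i S} \<subseteq> {T\<in>F. i \<in> T}" by auto
  then have "card {T\<in>F. i \<in> T \<and> T \<subseteq> insert i S} \<le> card {T\<in>F. i \<in> T}"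
    using finF by (intro card_mono) auto
  then show ?thesis using S unfolding F_def by simp
qed

lemma double_count:
  assumes col: "colouring k n c"
  shows "(\<Sum>i\<in>{1..k}. card {T \<in> multicoloured_sets n c. i \<in> T}) = 3 * card (multicoloured_sets n c)"
proof -
  define F where "F = multicoloured_sets n c"
  have finF: "finite F" unfolding F_def by (rule F_finite[OF col])
  have "(\<Sum>i\<in>{1..k}. card {T \<in> F. i \<in> T}) = (\<Sum>i\<in>{1..k}. \<Sum>T\<in>F. if i \<in> T then 1 else 0)"
  proof (rule sum.cong[OF refl])
    fix i show "card {T \<in> F. i \<in> T} = (\<Sum>T\<in>F. if i \<in> T then 1 else 0)"
      by (simp only: card_eq_sum sum.inter_filter[OF finF])
  qed
  also have "\<dots> = (\<Sum>T\<in>F. \<Sum>i\<in>{1..k}. if i \<in> T then 1 else 0)" by (rule sum.swap)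
  also have "\<dots> = (\<Sum>T\<in>F. 3)"
  proof (rule sum.cong[OF refl])
    fix T assume "T \<in> F"
    then have sub: "T \<subseteq> {1..k}" and c3: "card T = 3" using F_props[OF col] unfolding F_def by auto
    have "(\<Sum>i\<in>{1..k}. if i \<in> T then 1 else 0) = card {i\<in>{1..k}. i \<in> T}"
      by (simp only: card_eq_sum sum.inter_filter[OF finite_atLeastAtMost])
    also have "{i\<in>{1..k}. i \<in> T} = T" using sub by blast
    finally show "(\<Sum>i\<in>{1..k}. if i \<in> T then 1 else 0) = (3::nat)" using c3 by simp
  qed
  also have "\<dots> = 3 * card F" by simp
  finally show ?thesis unfolding F_def .
qed


definition cons :: "nat \<Rightarrow> nat \<Rightarrow> nat \<Rightarrow> nat" where
  "cons k x y = (if (x < k) = (y < k) then max (x mod k) (y mod k) + 1 else min (x mod k) (y mod k) + 1)"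

lemma t1: assumes "1 \<le> (k::nat)" shows "colouring k (2*k) (cons k)"
  unfolding colouring_def
proof (intro allI impI conjI)
  fix x y assume "x < 2*k" "y < 2*k" "x \<noteq> y"
  show "cons k x y = cons k y x" unfolding cons_def by (simp add: max.commute min.commute)
  have "x mod k < k" "y mod k < k" using assms by simp_all
  then have "max (x mod k) (y mod k) < k" "min (x mod k) (y mod k) < k" by auto
  then show "cons k x y \<in> {1..k}" unfolding cons_def atLeastAtMost_iff
    by (cases "(x<k) = (y<k)") (simp_all only: if_True if_False Suc_le_eq Suc_eq_plus1[symmetric] le_add2 simp_thms)
qed

lemma t2: assumes "m < (k::nat)" shows "(k+m, m) \<in> colour_edges (2*k) (cons k) (m+1)"
  using assms unfolding colour_edges_def cons_def by auto
lemma cons_cc: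
  assumes "1 \<le> k"
  shows "connected_colouring k (2*k) (cons k)"
proof -
  have col: "colouring k (2*k) (cons k)" by (rule t1[OF assms])
  have conn: "colour_connected (2*k) (cons k) (m+1)" if m: "m < k" for m
  proof -
    let ?E = "colour_edges (2*k) (cons k) (m+1)"
    have symE: "sym ?E" using col unfolding sym_def colour_edges_def colouring_def by auto
    have toM: "(u, m) \<in> ?E\<^sup>*" if u: "u < 2*k" for u
    proof (cases "u < k")
      case True
      have e1: "(k+m, m) \<in> ?E" using m unfolding colour_edges_def cons_def by auto
      show ?thesis
      proof (cases "u \<le> m")
        case True
        then show ?thesis
        proof (cases "u = m")
          case False
          then have "(u,m) \<in> ?E" using True \<open>u<k\<close> m unfolding colour_edges_def cons_def by auto
          then show ?thesis by auto
        qed simp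
      next
        case False
        then have "(u, k+m) \<in> ?E" using \<open>u<k\<close> m unfolding colour_edges_def cons_def by auto
        then show ?thesis using e1 by (meson converse_rtrancl_into_rtrancl r_into_rtrancl)
      qed
    next
      case False
      then obtain j where j: "u = k + j" "j < k" using u by (metis add_less_imp_less_left le_Suc_ex mult_2 not_less)
      have umod: "u mod k = j" using j by simp
      show ?thesis
      proof (cases "m \<le> j")
        case True
        then have "(u,m) \<in> ?E" using j m umod unfolding colour_edges_def cons_def by auto
        then show ?thesis by auto
      next
        case False
        have e1: "(k+m, m) \<in> ?E" using m unfolding colour_edges_def cons_def by auto
        have "(u, k+m) \<in> ?E" using j m umod False unfolding colour_edges_def cons_def by auto
        then show ?thesis using e1 by (meson converse_rtrancl_into_rtrancl r_into_rtrancl)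
      qed
    qed
    show ?thesis unfolding colour_connected_def
    proof (intro allI impI)
      fix u v assume "u < 2*k" "v < 2*k"
      have "(u,m) \<in> ?E\<^sup>*" using toM \<open>u<2*k\<close> .
      moreover have "(m,v) \<in> ?E\<^sup>*" using toM[OF \<open>v<2*k\<close>] sym_rtrancl[OF symE] by (meson symD)
      ultimately show "(u,v) \<in> ?E\<^sup>*" by simp
    qed
  qed
  have "\<forall>i\<in>{1..k}. colour_connected (2*k) (cons k) i"
  proof
    fix i assume "i \<in> {1..k}"
    then have "i = (i-1)+1" "i - 1 < k" by auto
    then show "colour_connected (2*k) (cons k) i" using conn by metis
  qed
  then show ?thesis using col unfolding connected_colouring_def by auto
qed


theorem corollary2:
  fixes k :: nat
  assumes "1 \<le> k"
  shows "real (f k) \<ge> real k * (real k - 2) / 3"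
proof (cases "k \<le> 2")
  case True
  then have "real k * (real k - 2) \<le> 0" using assms
    by (simp add: mult_nonneg_nonpos)
  then show ?thesis by simp
next
  case False
  define X where "X = {card (multicoloured_sets n c) | n c. 2 \<le> n \<and> connected_colouring k n c}"
  have "2 \<le> 2*k" using assms by simp
  then have "card (multicoloured_sets (2*k) (cons k)) \<in> X"
    unfolding X_def using cons_cc[OF assms] by blast
  then have "X \<noteq> {}" by auto
  then have "f k \<in> X" unfolding f_def X_def[symmetric] by (rule Inf_nat_def1)
  then obtain n c where nc: "f k = card (multicoloured_sets n c)" "2 \<le> n" "connected_colouring k n c"
    unfolding X_def by blast
  have col: "colouring k n c" using nc(3) unfolding connected_colouring_def by auto
  have "(\<Sum>i\<in>{1..k}. k - 2) \<le> (\<Sum>i\<in>{1..k}. card {T \<in> multicoloured_sets n c. i \<in> T})"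
    by (rule sum_mono) (use link[OF nc(3) nc(2)] False in auto)
  then have "k * (k - 2) \<le> 3 * f k" using double_count[OF col] nc(1) by simp
  then have "real (k * (k-2)) \<le> real (3 * f k)" by (simp only: of_nat_le_iff)
  then have h: "real k * real (k-2) \<le> 3 * real (f k)" by (simp only: of_nat_mult of_nat_numeral)
  moreover have "real (k - 2) = real k - 2" using False by auto
  ultimately have "real k * (real k - 2) \<le> 3 * real (f k)" by simp
  then show ?thesis by linarith
qed


end
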